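(* Let $\psi:\mathbb R^d\to\mathbb R^d$ be differentiable and bijective, and suppose there are constants $0\le\mathfrak m_1<\infty$ and $0\le\mathfrak m_2<1$ such that $\|\psi(v)-v\|\le\mathfrak m_1$ and $\|\nabla\psi(v)-I\|_{op}\le\mathfrak m_2$ for all $v\in\mathbb R^d$. Then for every $1<q<\infty$, \[ \mathsf R_q(\psi_\#\boldsymbol\gamma_d\,\|\,\boldsymbol\gamma_d)\le\frac{d\,\mathfrak m_2}{1-\mathfrak m_2}+\sqrt d\,\mathfrak m_1+\frac{q\,\mathfrak m_1^2}2. \]
   Context: $\boldsymbol\gamma_d=\mathcal N(0,I_d)$; $\psi_\#\boldsymbol\gamma_d$ is its pushforward under $\psi$; $\|\cdot\|_{op}$ is the Euclidean operator norm. For $q>1$, $\mathsf R_q(\mu\|\pi)=\frac1{q-1}\log\mathbb E_\pi[(d\mu/d\pi)^q]$ if $\mu\ll\pi$, else $+\infty$. *)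

theory Defs
  imports "HOL-Probability.Probability"
begin

definition std_gaussian :: "'a::euclidean_space measure" where
  "std_gaussian = density lborel
     (\<lambda>x. ennreal ((2 * pi) powr (- real DIM('a) / 2) * exp (- (norm x)\<^sup>2 / 2)))"

definition renyi_div :: "real \<Rightarrow> 'a measure \<Rightarrow> 'a measure \<Rightarrow> ereal" where
  "renyi_div q \<mu> \<pi> =
     (if sets \<mu> = sets \<pi> \<and> absolutely_continuous \<pi> \<mu> then
        (let I = (\<integral>\<^sup>+ x. ennreal (enn2real (RN_deriv \<pi> \<mu> x) powr q) \<partial>\<pi>) in
         if I = \<infinity> then \<infinity> else ereal (ln (enn2real I) / (q - 1)))
      else \<infinity>)"

end

theory Submission
  imports Defs
begin

typedef (overloaded) ('a::euclidean_space) bidx = "Basis :: 'a set"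
  using nonempty_Basis by blast

instance bidx :: (euclidean_space) finite
proof
  have "UNIV = Abs_bidx ` (Basis :: 'a set)"
    using type_definition.Abs_image[OF type_definition_bidx] by (simp add: eq_commute)
  then show "finite (UNIV :: 'a bidx set)" by (metis finite_Basis finite_imageI)
qed

instantiation bidx :: (euclidean_space) linorder
begin
definition less_eq_bidx :: "'a bidx \<Rightarrow> 'a bidx \<Rightarrow> bool" where
  "less_eq_bidx x y \<longleftrightarrow> to_nat x \<le> to_nat y"
definition less_bidx :: "'a bidx \<Rightarrow> 'a bidx \<Rightarrow> bool" where
  "less_bidx x y \<longleftrightarrow> to_nat x < to_nat y"
instance
proof
  fix x y z :: "'a bidx"
  show "(x < y) = (x \<le> y \<and> \<not> y \<le> x)" by (simp add: less_eq_bidx_def less_bidx_def) linarith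
  show "x \<le> x" by (simp add: less_eq_bidx_def)
  show "x \<le> y \<Longrightarrow> y \<le> z \<Longrightarrow> x \<le> z" by (simp add: less_eq_bidx_def)
  show "x \<le> y \<Longrightarrow> y \<le> x \<Longrightarrow> x = y"
    by (metis less_eq_bidx_def order_antisym injD[OF inj_to_nat])
  show "x \<le> y \<or> y \<le> x" by (simp add: less_eq_bidx_def) linarith
qed
end

instance bidx :: (euclidean_space) wellorder
proof
  fix P :: "'a bidx \<Rightarrow> bool" and a :: "'a bidx"
  assume H: "\<And>x. (\<And>y. y < x \<Longrightarrow> P y) \<Longrightarrow> P x"
  have "\<And>n. \<forall>x::'a bidx. to_nat x = n \<longrightarrow> P x"
  proof -
    fix n show "\<forall>x::'a bidx. to_nat x = n \<longrightarrow> P x"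
    proof (induction n rule: less_induct)
      case (less n)
      show ?case
      proof (intro allI impI)
        fix x :: "'a bidx" assume xn: "to_nat x = n"
        show "P x"
        proof (rule H)
          fix y :: "'a bidx" assume "y < x"
          then have "to_nat y < n" using xn by (simp add: less_bidx_def)
          then show "P y" using less.IH by blast
        qed
      qed
    qed
  qed
  then show "P a" by blast
qed

lemma card_bidx: "CARD('a::euclidean_space bidx) = DIM('a)"
  using type_definition.card[OF type_definition_bidx] by simp

definition bTo :: "'a::euclidean_space \<Rightarrow> real^('a bidx)" where
  "bTo x = (\<chi> i. x \<bullet> Rep_bidx i)"
definition bFrom :: "real^('a::euclidean_space bidx) \<Rightarrow> 'a" where
  "bFrom v = (\<Sum>i\<in>UNIV. (v $ i) *\<^sub>R Rep_bidx i)"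

lemma bij_Rep_bidx: "bij_betw Rep_bidx UNIV (Basis :: 'a::euclidean_space set)"
  by (metis bij_betw_def inj_on_def Rep_bidx_inject type_definition.Rep_range[OF type_definition_bidx])

lemma sum_bidx: "(\<Sum>i\<in>UNIV. f (Rep_bidx i)) = (\<Sum>b\<in>(Basis::'a::euclidean_space set). f b)"
  using sum.reindex_bij_betw[OF bij_Rep_bidx] by blast

lemma prod_bidx: "(\<Prod>i\<in>UNIV. f (Rep_bidx i)) = (\<Prod>b\<in>(Basis::'a::euclidean_space set). f b)"
  using prod.reindex_bij_betw[OF bij_Rep_bidx] by blast

lemma bFrom_TT[simp]: "bFrom (bTo x) = x"
  unfolding bFrom_def bTo_def using sum_bidx[of "\<lambda>b. (x \<bullet> b) *\<^sub>R b"] by (simp add: euclidean_representation)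

lemma inner_SS: "bFrom v \<bullet> Rep_bidx j = v $ j"
proof -
  have "bFrom v \<bullet> Rep_bidx j = (\<Sum>i\<in>UNIV. v $ i * (Rep_bidx i \<bullet> Rep_bidx j))"
    by (simp add: bFrom_def inner_sum_left)
  also have "\<dots> = (\<Sum>i\<in>UNIV. if i = j then v $ j else 0)"
  proof (intro sum.cong refl)
    fix i assume "i \<in> (UNIV :: 'a bidx set)"
    show "v $ i * (Rep_bidx i \<bullet> Rep_bidx j) = (if i = j then v $ j else 0)"
      using inner_Basis[OF Rep_bidx[of i] Rep_bidx[of j]] Rep_bidx_inject[of i j] by simp
  qed
  finally show ?thesis by simp
qed

lemma bTo_SS[simp]: "bTo (bFrom v) = v"
  by (simp add: bTo_def inner_SS vec_eq_iff)

lemma linear_TT: "linear bTo"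
  by (rule linearI) (auto simp: bTo_def vec_eq_iff inner_add_left)

lemma linear_SS: "linear bFrom"
  by (rule linearI) (auto simp: bFrom_def scaleR_add_left sum.distrib scaleR_sum_right)

lemma norm_TT: "norm (bTo x) = norm x"
proof -
  have "(norm (bTo x))^2 = (\<Sum>i\<in>UNIV. (x \<bullet> Rep_bidx i)^2)"
    by (simp add: bTo_def norm_vec_def L2_set_def sum_nonneg real_norm_def)
  also have "\<dots> = (\<Sum>b\<in>Basis. (x \<bullet> b)^2)" by (rule sum_bidx)
  also have "\<dots> = (\<Sum>b\<in>Basis. (x \<bullet> b) * (x \<bullet> b))" by (simp add: power2_eq_square)
  also have "\<dots> = x \<bullet> x" by (rule euclidean_inner[symmetric])
  also have "\<dots> = (norm x)^2" by (simp add: power2_norm_eq_inner)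
  finally show ?thesis by simp
qed

lemma prod_Basis_cart: "(\<Prod>b\<in>(Basis::(real^'n) set). f b) = (\<Prod>i\<in>UNIV. f (axis i 1))"
proof -
  have "(Basis::(real^'n) set) = (\<lambda>i. axis i 1) ` UNIV"
    by (auto simp: Basis_vec_def)
  moreover have "inj (\<lambda>i::'n. axis i (1::real))"
    by (auto simp: inj_def axis_eq_axis)
  ultimately show ?thesis using prod.reindex[of "\<lambda>i::'n. axis i (1::real)" UNIV f] by simp
qed

lemma bTo_cont: "continuous_on UNIV bTo"
  using linear_continuous_on linear_TT linear_conv_bounded_linear by blast

lemma bFrom_cont: "continuous_on UNIV bFrom"
  using linear_continuous_on linear_SS linear_conv_bounded_linear by blast

lemma bTo_meas[measurable]: "bTo \<in> borel_measurable borel"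
  by (rule borel_measurable_continuous_onI[OF bTo_cont])

lemma bFrom_meas[measurable]: "bFrom \<in> borel_measurable borel"
  by (rule borel_measurable_continuous_onI[OF bFrom_cont])

lemma Basis_bidx: "(Basis::'a::euclidean_space set) = range Rep_bidx"
  using type_definition.Rep_range[OF type_definition_bidx] by (rule sym)

lemma vimage_bTo_box: "bTo -` box l u = box (bFrom l) (bFrom u)"
proof -
  have "x \<in> bTo -` box l u \<longleftrightarrow> x \<in> box (bFrom l) (bFrom u)" for x
  proof -
    have "x \<in> bTo -` box l u \<longleftrightarrow> (\<forall>i. l$i < x \<bullet> Rep_bidx i \<and> x \<bullet> Rep_bidx i < u$i)"
      by (simp add: mem_box_cart bTo_def)
    also have "\<dots> \<longleftrightarrow> (\<forall>b\<in>Basis. bFrom l \<bullet> b < x \<bullet> b \<and> x \<bullet> b < bFrom u \<bullet> b)"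
      by (simp add: Basis_bidx inner_SS)
    also have "\<dots> \<longleftrightarrow> x \<in> box (bFrom l) (bFrom u)" by (simp add: mem_box)
    finally show ?thesis .
  qed
  then show ?thesis by blast
qed

lemma lborel_TT: "distr lborel borel bTo = (lborel :: (real^('a::euclidean_space bidx)) measure)"
proof (rule lborel_eqI[symmetric])
  fix l u :: "real^('a bidx)"
  assume le: "\<And>b. b \<in> Basis \<Longrightarrow> l \<bullet> b \<le> u \<bullet> b"
  have le': "l $ i \<le> u $ i" for i using le[of "axis i 1"] by (auto simp: Basis_vec_def cart_eq_inner_axis)
  have "emeasure (distr lborel borel bTo) (box l u) = emeasure lborel (box (bFrom l) (bFrom u) :: 'a set)"
    by (simp add: emeasure_distr vimage_bTo_box)
  also have "\<dots> = (\<Prod>b\<in>Basis. (bFrom u - bFrom l) \<bullet> b)"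
  proof -
    have "\<forall>b\<in>(Basis::'a set). bFrom l \<bullet> b \<le> bFrom u \<bullet> b"
      by (metis Rep_bidx_cases inner_SS le')
    then show ?thesis by (simp add: emeasure_lborel_box_eq)
  qed
  also have "\<dots> = (\<Prod>i\<in>UNIV. (bFrom u - bFrom l) \<bullet> Rep_bidx i)"
    using prod_bidx[of "\<lambda>b. (bFrom u - bFrom l) \<bullet> b"] by simp
  also have "\<dots> = (\<Prod>i\<in>UNIV. (u - l) $ i)"
    by (simp add: inner_diff_left inner_SS)
  also have "\<dots> = (\<Prod>b\<in>Basis. (u - l) \<bullet> b)"
    by (simp add: prod_Basis_cart cart_eq_inner_axis)
  finally show "emeasure (distr lborel borel bTo) (box l u) = (\<Prod>b\<in>Basis. (u - l) \<bullet> b)" .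
qed simp

lemma lborel_SS: "distr lborel borel bFrom = (lborel :: 'a::euclidean_space measure)"
proof -
  have "distr (lborel :: (real^('a bidx)) measure) borel bFrom = distr (distr lborel borel bTo) borel bFrom"
    by (simp add: lborel_TT)
  also have "\<dots> = distr lborel borel (bFrom \<circ> bTo)"
    by (simp add: distr_distr)
  also have "\<dots> = distr lborel borel (\<lambda>x. x)" by (simp add: comp_def)
  also have "\<dots> = lborel" by (rule distr_id2) simp
  finally show ?thesis .
qed

lemma det_lower:
  fixes L :: "real^'n::{finite,wellorder} \<Rightarrow> real^'n::_"
  assumes lin: "linear L" and m: "0 \<le> m" "m < 1" and b: "\<And>h. norm (L h - h) \<le> m * norm h"
  shows "(1 - m)^CARD('n) \<le> \<bar>det (matrix L)\<bar>"
proof -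
  have lo: "(1-m) * norm h \<le> norm (L h)" for h
  proof -
    have "norm h \<le> norm (L h) + norm (L h - h)"
      using norm_triangle_ineq4[of "L h" "L h - h"] by simp
    then show ?thesis using b[of h] by (simp add: algebra_simps)
  qed
  have inj: "inj L"
  proof (rule injI)
    fix x y assume "L x = L y"
    then have "L (x - y) = 0" by (simp add: linear_diff[OF lin])
    then have "(1-m) * norm (x - y) \<le> 0" using lo[of "x-y"] by simp
    then show "x = y" using m by (simp add: mult_le_0_iff)
  qed
  have surj: "surj L" using linear_injective_imp_surjective[OF lin inj] by simp
  define z where "z = L 0"
  have z0: "z = 0" by (simp add: z_def linear_0[OF lin])
  have sub: "ball z (1-m) \<subseteq> L ` ball z 1"
  proof
    fix y assume y: "y \<in> ball z (1-m)"
    obtain x where x: "y = L x" using surj by (metis surjD)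
    have "(1-m) * norm x < 1 - m" using lo[of x] y x z0 by simp
    then have "norm x < 1" using m by simp
    then show "y \<in> L ` ball z 1" using x z0 by auto
  qed
  have lm: "L ` ball z 1 \<in> lmeasurable" by (rule measurable_linear_image[OF lin lmeasurable_ball])
  have meq: "measure lebesgue (L ` ball z 1) = \<bar>det (matrix L)\<bar> * measure lebesgue (ball z 1)"
    by (rule measure_linear_image[OF lin lmeasurable_ball])
  have A1: "measure lebesgue (ball z (1-m)) \<le> \<bar>det (matrix L)\<bar> * measure lebesgue (ball z 1)"
    using measure_mono_fmeasurable[OF sub _ lm] meq by simp
  have A2: "measure lebesgue (ball z 1) > 0"
    using content_ball_pos[of 1 z] by simp
  have A3: "(1-m)^CARD('n) * measure lebesgue (ball z 1) = measure lebesgue (ball z (1-m))"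
    using content_ball_conv_unit_ball[of "1-m" z] content_ball_conv_unit_ball[of 1 z] m by simp
  have "(1-m)^CARD('n) * measure lebesgue (ball z 1) \<le> \<bar>det (matrix L)\<bar> * measure lebesgue (ball z 1)"
    using A1 A3 by simp
  then show ?thesis using A2 by (simp add: mult_le_cancel_right)
qed

lemma key_cart:
  fixes f :: "real^'n::{finite,wellorder} \<Rightarrow> real^'n::_"
  assumes der: "\<And>x. (f has_derivative f' x) (at x)" and bij: "bij f"
    and m: "0 \<le> m" "m < 1" and b: "\<And>x h. norm (f' x h - h) \<le> m * norm h"
    and A: "A \<in> sets borel"
  shows "emeasure lborel (f -` A) \<le> ennreal (1 / (1-m)^CARD('n)) * emeasure lborel A"
proof -
  define c where "c = (1-m)^CARD('n)"
  have cpos: "c > 0" using m by (simp add: c_def)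
  have lin: "linear (f' x)" for x using der has_derivative_linear by blast
  have detb: "c \<le> \<bar>det (matrix (f' x))\<bar>" for x unfolding c_def by (rule det_lower[OF lin m b])
  have cont: "continuous_on UNIV f" using der
    by (meson has_derivative_continuous continuous_at_imp_continuous_on)
  have fmeas: "f \<in> borel_measurable borel" using cont by (rule borel_measurable_continuous_onI)
  define S where "S = f -` A"
  have Sb: "S \<in> sets borel" using measurable_sets_borel[OF fmeas A] by (simp add: S_def)
  have SL: "S \<in> sets lebesgue" using Sb by simp
  have img: "f ` S = A" using bij by (simp add: S_def bij_def surj_image_vimage_eq)
  have injS: "inj_on f S" using bij by (meson bij_is_inj inj_on_subset subset_UNIV)
  have derS: "\<And>x. x \<in> S \<Longrightarrow> (f has_derivative f' x) (at x within S)"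
    by (simp add: has_derivative_at_withinI der)
  show ?thesis
  proof (cases "emeasure lborel A = \<infinity>")
    case True then show ?thesis using cpos m by (simp add: ennreal_mult_top c_def)
  next
    case False
    have AL: "A \<in> lmeasurable" using A False by (simp add: fmeasurable_def less_top)
    have int: "(\<lambda>x. \<bar>det (matrix (f' x))\<bar>) integrable_on S"
      using measurable_differentiable_image_eq[OF SL derS injS] AL img by simp
    have meq: "measure lebesgue A = integral S (\<lambda>x. \<bar>det (matrix (f' x))\<bar>)"
      using measure_differentiable_image_eq[OF SL derS injS int] img by simp
    have cabs: "(\<lambda>x. c) absolutely_integrable_on S"
      by (rule measurable_bounded_by_integrable_imp_absolutely_integrable[OF _ SL int]) (use detb cpos in auto)
    then have cint: "(\<lambda>x. c) integrable_on S" using absolutely_integrable_on_def by blast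
    have "(\<lambda>x. (1/c) * c) integrable_on S" using cint integrable_on_cmult_left[of "\<lambda>x. c" S "1/c"] by simp
    then have SLm: "S \<in> lmeasurable" using cpos by (simp add: lmeasurable_iff_integrable_on)
    have "c * measure lebesgue S = integral S (\<lambda>x. c)"
      using lmeasure_integral[OF SLm] integral_mult[of "\<lambda>x. 1::real" S c] SLm
      by (simp add: lmeasurable_iff_integrable_on)
    also have "\<dots> \<le> integral S (\<lambda>x. \<bar>det (matrix (f' x))\<bar>)"
      by (rule integral_le[OF cint int]) (use detb in auto)
    finally have ineq: "c * measure lebesgue S \<le> measure lebesgue A" using meq by simp
    have "emeasure lborel S = ennreal (measure lebesgue S)"
      using emeasure_eq_measure2[OF SLm] Sb by simp
    also have "\<dots> \<le> ennreal ((1/c) * measure lebesgue A)"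
      using ineq cpos by (intro ennreal_leI) (simp add: field_simps)
    also have "\<dots> = ennreal (1/c) * ennreal (measure lebesgue A)"
      by (rule ennreal_mult; use cpos in simp)
    also have "ennreal (measure lebesgue A) = emeasure lborel A"
      using emeasure_eq_measure2[OF AL] A by simp
    finally show ?thesis by (simp add: S_def c_def)
  qed
qed

lemma key_a:
  fixes \<psi> :: "'a::euclidean_space \<Rightarrow> 'a"
  assumes der: "\<And>x. (\<psi> has_derivative \<psi>' x) (at x)" and bij: "bij \<psi>"
    and m: "0 \<le> m" "m < 1" and b: "\<And>x h. norm (\<psi>' x h - h) \<le> m * norm h"
    and A: "A \<in> sets borel"
  shows "emeasure lborel (\<psi> -` A) \<le> ennreal (1 / (1-m)^DIM('a)) * emeasure lborel A"
proof -
  define f where "f = bTo \<circ> \<psi> \<circ> bFrom"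
  define f' where "f' x = bTo \<circ> \<psi>' (bFrom x) \<circ> bFrom" for x
  have blT: "bounded_linear bTo" using linear_TT linear_conv_bounded_linear by blast
  have blS: "bounded_linear bFrom" using linear_SS linear_conv_bounded_linear by blast
  have derf: "(f has_derivative f' x) (at x)" for x
  proof -
    have "((\<psi> \<circ> bFrom) has_derivative (\<psi>' (bFrom x) \<circ> bFrom)) (at x)"
      by (rule diff_chain_at[OF bounded_linear_imp_has_derivative[OF blS] der])
    then have "((bTo \<circ> (\<psi> \<circ> bFrom)) has_derivative (bTo \<circ> (\<psi>' (bFrom x) \<circ> bFrom))) (at x)"
      by (rule diff_chain_at[OF _ bounded_linear_imp_has_derivative[OF blT]])
    then show ?thesis by (simp add: f_def f'_def comp_assoc)
  qed
  have bijT: "bij (bTo :: 'a \<Rightarrow> _)"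
    by (rule o_bij[of bFrom]) (auto simp: fun_eq_iff)
  have bijS: "bij (bFrom :: _ \<Rightarrow> 'a)"
    by (rule o_bij[of bTo]) (auto simp: fun_eq_iff)
  have bijf: "bij f" unfolding f_def by (intro bij_comp bijT bijS bij)
  have bf: "norm (f' x h - h) \<le> m * norm h" for x h
  proof -
    have "f' x h - h = bTo (\<psi>' (bFrom x) (bFrom h) - bFrom h)"
      by (simp add: f'_def linear_diff[OF linear_TT])
    then have "norm (f' x h - h) = norm (\<psi>' (bFrom x) (bFrom h) - bFrom h)"
      by (simp add: norm_TT)
    also have "\<dots> \<le> m * norm (bFrom h)" by (rule b)
    also have "norm (bFrom h) = norm h" using norm_TT[of "bFrom h"] by simp
    finally show ?thesis .
  qed
  have A': "bFrom -` A \<in> sets borel" using measurable_sets_borel[OF bFrom_meas A] .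
  have "emeasure lborel (f -` (bFrom -` A)) \<le> ennreal (1 / (1-m)^CARD('a bidx)) * emeasure lborel (bFrom -` A)"
    by (rule key_cart[OF derf bijf m bf A'])
  moreover have "f -` (bFrom -` A) = bFrom -` (\<psi> -` A)" by (auto simp: f_def)
  moreover have "emeasure lborel (\<psi> -` A) = emeasure lborel (bFrom -` (\<psi> -` A))"
  proof -
    have "emeasure (lborel::'a measure) (\<psi> -` A) = emeasure (distr lborel borel bFrom) (\<psi> -` A)"
      by (simp add: lborel_SS)
    also have "\<dots> = emeasure lborel (bFrom -` (\<psi> -` A))"
      using der by (subst emeasure_distr) (auto intro!: measurable_sets_borel[OF _ A] borel_measurable_continuous_onI
            continuous_at_imp_continuous_on has_derivative_continuous)
    finally show ?thesis .
  qed
  moreover have "emeasure (lborel::'a measure) A = emeasure lborel (bFrom -` A)"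
  proof -
    have "emeasure (lborel::'a measure) A = emeasure (distr lborel borel bFrom) A"
      by (simp add: lborel_SS)
    also have "\<dots> = emeasure lborel (bFrom -` A)"
      using A by (subst emeasure_distr) auto
    finally show ?thesis .
  qed
  ultimately show ?thesis by (simp add: card_bidx)
qed

lemma key_int:
  fixes \<psi> :: "'a::euclidean_space \<Rightarrow> 'a"
  assumes der: "\<And>x. (\<psi> has_derivative \<psi>' x) (at x)" and bij: "bij \<psi>"
    and m: "0 \<le> m" "m < 1" and b: "\<And>x h. norm (\<psi>' x h - h) \<le> m * norm h"
    and F: "F \<in> borel_measurable borel"
  shows "(\<integral>\<^sup>+x. F (\<psi> x) \<partial>lborel) \<le> ennreal (1 / (1-m)^DIM('a)) * (\<integral>\<^sup>+y. F y \<partial>lborel)"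
proof -
  define K where "K = 1 / (1-m)^DIM('a)"
  have Kpos: "K \<ge> 0" using m by (simp add: K_def)
  have pm: "\<psi> \<in> borel_measurable borel"
    using der by (auto intro!: borel_measurable_continuous_onI
            continuous_at_imp_continuous_on has_derivative_continuous)
  have le: "distr lborel borel \<psi> \<le> density lborel (\<lambda>_. ennreal K)"
  proof (subst le_measure_iff, simp, intro le_funI)
    fix A
    show "emeasure (distr lborel borel \<psi>) A \<le> emeasure (density lborel (\<lambda>_. ennreal K)) A"
    proof (cases "A \<in> sets borel")
      case True
      have "emeasure (distr lborel borel \<psi>) A = emeasure lborel (\<psi> -` A)"
        using True pm by (simp add: emeasure_distr)
      also have "\<dots> \<le> ennreal K * emeasure lborel A"
        unfolding K_def by (rule key_a[OF der bij m b True])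
      also have "\<dots> = emeasure (density lborel (\<lambda>_. ennreal K)) A"
        using True by (simp add: emeasure_density nn_integral_cmult_indicator)
      finally show ?thesis .
    next
      case False
      then show ?thesis by (simp add: emeasure_notin_sets)
    qed
  qed
  have "(\<integral>\<^sup>+x. F (\<psi> x) \<partial>lborel) = (\<integral>\<^sup>+y. F y \<partial>distr lborel borel \<psi>)"
    using pm F by (simp add: nn_integral_distr)
  also have "\<dots> \<le> (\<integral>\<^sup>+y. F y \<partial>density lborel (\<lambda>_. ennreal K))"
    by (rule nn_integral_mono_measure[OF _ le]) simp
  also have "\<dots> = (\<integral>\<^sup>+y. ennreal K * F y \<partial>lborel)"
    using F by (simp add: nn_integral_density)
  also have "\<dots> = ennreal K * (\<integral>\<^sup>+y. F y \<partial>lborel)"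
    using F by (simp add: nn_integral_cmult)
  finally show ?thesis by (simp add: K_def)
qed

lemma gauss1:
  assumes b: "0 < \<beta>"
  shows "(\<integral>\<^sup>+t. ennreal (exp (- \<beta> * t\<^sup>2 / 2)) \<partial>lborel) = ennreal (sqrt (2*pi/\<beta>))"
proof -
  define \<sigma> where "\<sigma> = 1 / sqrt \<beta>"
  have sp: "\<sigma> > 0" using b by (simp add: \<sigma>_def)
  have s2: "\<sigma>\<^sup>2 = 1/\<beta>" using b by (simp add: \<sigma>_def power_divide)
  have eq: "exp (- \<beta> * t\<^sup>2 / 2) = sqrt (2*pi/\<beta>) * normal_density 0 \<sigma> t" for t
    using b by (simp add: normal_density_def s2 field_simps real_sqrt_divide)
  have "(\<integral>\<^sup>+t. ennreal (normal_density 0 \<sigma> t) \<partial>lborel) = 1"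
  proof -
    interpret prob_space "density lborel (normal_density 0 \<sigma>)"
      by (rule prob_space_normal_density[OF sp])
    have "emeasure (density lborel (normal_density 0 \<sigma>)) UNIV = 1"
      using emeasure_space_1 by simp
    then show ?thesis by (simp add: emeasure_density)
  qed
  then have "(\<integral>\<^sup>+t. ennreal (sqrt (2*pi/\<beta>)) * ennreal (normal_density 0 \<sigma> t) \<partial>lborel) = ennreal (sqrt (2*pi/\<beta>))"
    by (simp add: nn_integral_cmult)
  moreover have "(\<lambda>t. ennreal (exp (- \<beta> * t\<^sup>2 / 2))) = (\<lambda>t. ennreal (sqrt (2*pi/\<beta>)) * ennreal (normal_density 0 \<sigma> t))"
  proof (rule ext)
    fix t
    show "ennreal (exp (- \<beta> * t\<^sup>2 / 2)) = ennreal (sqrt (2*pi/\<beta>)) * ennreal (normal_density 0 \<sigma> t)"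
      using b by (subst eq) (rule ennreal_mult, simp_all)
  qed
  ultimately show ?thesis by simp
qed

lemma norm_sq_Basis: "(norm (x::'a::euclidean_space))\<^sup>2 = (\<Sum>b\<in>Basis. (x \<bullet> b)\<^sup>2)"
proof -
  have "(norm x)\<^sup>2 = x \<bullet> x" by (simp add: power2_norm_eq_inner)
  also have "\<dots> = (\<Sum>b\<in>Basis. (x \<bullet> b) * (x \<bullet> b))" by (rule euclidean_inner)
  finally show ?thesis by (simp add: power2_eq_square)
qed

lemma gauss_d:
  assumes b: "0 < \<beta>"
  shows "(\<integral>\<^sup>+x. ennreal (exp (- \<beta> * (norm x)\<^sup>2 / 2)) \<partial>(lborel::'a::euclidean_space measure))
          = ennreal (sqrt (2*pi/\<beta>) ^ DIM('a))"
proof -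
  have eq: "ennreal (exp (- \<beta> * (norm x)\<^sup>2 / 2)) = (\<Prod>b\<in>Basis. ennreal (exp (- \<beta> * (x \<bullet> b)\<^sup>2 / 2)))" for x :: 'a
  proof -
    have "- \<beta> * (norm x)\<^sup>2 / 2 = (\<Sum>b\<in>Basis. - \<beta> * (x \<bullet> b)\<^sup>2 / 2)"
      by (simp add: norm_sq_Basis sum_distrib_left sum_divide_distrib)
    then have "exp (- \<beta> * (norm x)\<^sup>2 / 2) = (\<Prod>b\<in>Basis. exp (- \<beta> * (x \<bullet> b)\<^sup>2 / 2))"
      by (simp add: exp_sum)
    then show ?thesis by (simp add: prod_ennreal)
  qed
  have "(\<integral>\<^sup>+x. ennreal (exp (- \<beta> * (norm x)\<^sup>2 / 2)) \<partial>(lborel::'a measure))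
      = (\<integral>\<^sup>+x. (\<Prod>b\<in>Basis. ennreal (exp (- \<beta> * (x \<bullet> b)\<^sup>2 / 2))) \<partial>(lborel::'a measure))"
    by (intro nn_integral_cong eq)
  also have "\<dots> = (\<Prod>b\<in>(Basis::'a set). (\<integral>\<^sup>+t. ennreal (exp (- \<beta> * t\<^sup>2 / 2)) \<partial>lborel))"
    by (rule nn_integral_lborel_prod) auto
  also have "\<dots> = (\<Prod>b\<in>(Basis::'a set). ennreal (sqrt (2*pi/\<beta>)))"
    using gauss1[OF b] by simp
  also have "\<dots> = ennreal (sqrt (2*pi/\<beta>) ^ DIM('a))"
    using b by (simp, subst ennreal_power) auto
  finally show ?thesis .
qed

lemma sqrt_pow_powr: "0 < x \<Longrightarrow> sqrt x ^ n = x powr (real n / 2)"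
  by (simp add: powr_half_sqrt[symmetric] powr_realpow[symmetric] powr_powr)

lemma gauss_total:
  "(\<integral>\<^sup>+x. ennreal ((2 * pi) powr (- real DIM('a) / 2) * exp (- (norm x)\<^sup>2 / 2)) \<partial>(lborel::'a::euclidean_space measure)) = 1"
proof -
  have "(\<integral>\<^sup>+x. ennreal ((2 * pi) powr (- real DIM('a) / 2) * exp (- (norm x)\<^sup>2 / 2)) \<partial>(lborel::'a measure))
     = ennreal ((2 * pi) powr (- real DIM('a) / 2)) * (\<integral>\<^sup>+x. ennreal (exp (- 1 * (norm x)\<^sup>2 / 2)) \<partial>(lborel::'a measure))"
    by (simp add: ennreal_mult nn_integral_cmult)
  also have "\<dots> = ennreal ((2 * pi) powr (- real DIM('a) / 2) * sqrt (2*pi) ^ DIM('a))"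
    using gauss_d[of 1, where 'a='a] by (simp add: ennreal_mult)
  also have "(2 * pi) powr (- real DIM('a) / 2) * sqrt (2*pi) ^ DIM('a) = 1"
    by (simp add: sqrt_pow_powr powr_add[symmetric])
  finally show ?thesis by simp
qed

lemma prob_gauss: "prob_space (std_gaussian :: 'a::euclidean_space measure)"
  using gauss_total[where 'a='a] by (intro prob_spaceI) (simp add: std_gaussian_def emeasure_density)

lemma gauss_mgf_norm:
  assumes s: "0 \<le> s"
  shows "(\<integral>\<^sup>+x. ennreal (exp (s * norm x)) \<partial>(std_gaussian::'a::euclidean_space measure))
           \<le> ennreal (exp (s * sqrt (real DIM('a)) + s\<^sup>2 / 2))"
proof -
  define d where "d = real DIM('a)"
  define c where "c = (2 * pi) powr (- d / 2)"
  have d1: "d \<ge> 1" by (simp add: d_def DIM_positive Suc_le_eq)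
  have sd: "sqrt d > 0" using d1 by simp
  define a where "a = s + sqrt d"
  have apos: "a > 0" using s sd unfolding a_def by linarith
  define \<beta> where "\<beta> = sqrt d / a"
  have bpos: "\<beta> > 0" using sd apos by (simp add: \<beta>_def)
  have beq: "\<beta> = 1 - s / a" using apos by (simp add: \<beta>_def a_def field_simps)
  have pw: "c * exp (- (norm x)\<^sup>2 / 2) * exp (s * norm x) \<le> c * exp (s * a / 2) * exp (- \<beta> * (norm x)\<^sup>2 / 2)"
    for x :: 'a
  proof -
    define n where "n = norm x"
    have "0 \<le> (n - a)\<^sup>2" by simp
    then have "2 * a * n \<le> a\<^sup>2 + n\<^sup>2" by (simp add: power2_eq_square algebra_simps)
    then have "n \<le> a / 2 + n\<^sup>2 / (2 * a)" using apos by (simp add: field_simps power2_eq_square)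
    then have "s * n \<le> s * (a / 2 + n\<^sup>2 / (2 * a))" using s by (rule mult_left_mono)
    then have "- n\<^sup>2 / 2 + s * n \<le> s * a / 2 + (- \<beta> * n\<^sup>2 / 2)"
      using apos by (simp add: beq field_simps)
    then have "exp (- n\<^sup>2 / 2 + s * n) \<le> exp (s * a / 2 + (- \<beta> * n\<^sup>2 / 2))" by simp
    then have "exp (- n\<^sup>2 / 2) * exp (s * n) \<le> exp (s * a / 2) * exp (- \<beta> * n\<^sup>2 / 2)"
      by (simp only: exp_add)
    moreover have "c \<ge> 0" by (simp add: c_def)
    ultimately show ?thesis unfolding n_def by (metis mult.assoc mult_left_mono)
  qed
  have "(\<integral>\<^sup>+x. ennreal (exp (s * norm x)) \<partial>(std_gaussian::'a measure))
      = (\<integral>\<^sup>+x. ennreal (c * exp (- (norm x)\<^sup>2 / 2)) * ennreal (exp (s * norm x)) \<partial>(lborel::'a measure))"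
    unfolding std_gaussian_def c_def d_def by (subst nn_integral_density) auto
  also have "\<dots> \<le> (\<integral>\<^sup>+x. ennreal (c * exp (s * a / 2)) * ennreal (exp (- \<beta> * (norm x)\<^sup>2 / 2)) \<partial>(lborel::'a measure))"
  proof (rule nn_integral_mono)
    fix x :: 'a
    have "c \<ge> 0" by (simp add: c_def)
    then show "ennreal (c * exp (- (norm x)\<^sup>2 / 2)) * ennreal (exp (s * norm x))
        \<le> ennreal (c * exp (s * a / 2)) * ennreal (exp (- \<beta> * (norm x)\<^sup>2 / 2))"
      using pw[of x] by (simp add: ennreal_mult[symmetric] ennreal_leI)
  qed
  also have "\<dots> = ennreal (c * exp (s * a / 2)) * ennreal (sqrt (2*pi/\<beta>) ^ DIM('a))"
    using gauss_d[OF bpos, where 'a='a] by (simp add: nn_integral_cmult)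
  also have "\<dots> = ennreal (c * exp (s * a / 2) * sqrt (2*pi/\<beta>) ^ DIM('a))"
    by (rule ennreal_mult[symmetric]) (use bpos in \<open>auto simp: c_def\<close>)
  also have "\<dots> \<le> ennreal (exp (s * sqrt d + s\<^sup>2 / 2))"
  proof (rule ennreal_leI)
    have F1: "sqrt (2*pi/\<beta>) ^ DIM('a) = sqrt (2*pi) ^ DIM('a) * sqrt (1/\<beta>) ^ DIM('a)"
      by (simp add: real_sqrt_divide power_divide field_simps)
    have F2: "c * sqrt (2*pi) ^ DIM('a) = 1"
      by (simp add: c_def d_def sqrt_pow_powr powr_add[symmetric])
    have F3: "sqrt (1/\<beta>) ^ DIM('a) \<le> exp (s * sqrt d / 2)"
    proof -
      define t where "t = s / sqrt d"
      have t0: "t \<ge> 0" using s sd by (simp add: t_def)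
      have ib: "1/\<beta> = 1 + t" using sd apos by (simp add: \<beta>_def a_def t_def field_simps)
      have "sqrt (1 + t) \<le> exp (t / 2)"
      proof -
        have "1 + t \<le> exp t" by (rule exp_ge_add_one_self)
        also have "exp t = (exp (t/2))\<^sup>2" by (simp add: power2_eq_square exp_add[symmetric])
        finally show ?thesis using t0 by (simp add: real_le_lsqrt)
      qed
      then have "sqrt (1 + t) ^ DIM('a) \<le> exp (t / 2) ^ DIM('a)"
        using t0 by (intro power_mono) auto
      also have "\<dots> = exp (d * t / 2)" by (simp add: d_def exp_of_nat_mult[symmetric])
      also have "d * t / 2 = s * sqrt d / 2"
      proof -
        have dd: "d = sqrt d * sqrt d" using d1 by simp
        have st: "sqrt d * t = s" using sd by (simp add: t_def)
        have "d * t = sqrt d * (sqrt d * t)" using dd by (metis mult.assoc)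
        also have "\<dots> = s * sqrt d" by (metis st mult.commute)
        finally show ?thesis by simp
      qed
      finally show ?thesis using ib by simp
    qed
    have "c * exp (s * a / 2) * sqrt (2*pi/\<beta>) ^ DIM('a) = exp (s * a / 2) * ((c * sqrt (2*pi) ^ DIM('a)) * sqrt (1/\<beta>) ^ DIM('a))"
      by (subst F1) (simp only: mult_ac)
    also have "\<dots> = exp (s * a / 2) * sqrt (1/\<beta>) ^ DIM('a)" by (simp only: F2 mult_1_left)
    also have "\<dots> \<le> exp (s * a / 2) * exp (s * sqrt d / 2)"
      by (rule mult_left_mono[OF F3]) simp
    also have "\<dots> = exp (s * sqrt d + s\<^sup>2 / 2)"
      by (simp add: exp_add[symmetric] a_def power2_eq_square field_simps)
    finally show "c * exp (s * a / 2) * sqrt (2*pi/\<beta>) ^ DIM('a) \<le> exp (s * sqrt d + s\<^sup>2 / 2)" .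
  qed
  finally show ?thesis by (simp add: d_def)
qed

theorem lemma15:
  fixes \<psi> :: "'a::euclidean_space \<Rightarrow> 'a"
    and \<psi>' :: "'a \<Rightarrow> 'a \<Rightarrow> 'a"
    and m1 m2 q :: real
  assumes deriv: "\<And>v. (\<psi> has_derivative \<psi>' v) (at v)"
    and bij: "bij \<psi>"
    and m1: "0 \<le> m1" and m2: "0 \<le> m2" "m2 < 1"
    and bound1: "\<And>v. norm (\<psi> v - v) \<le> m1"
    and bound2: "\<And>v. onorm (\<lambda>h. \<psi>' v h - h) \<le> m2"
    and q: "1 < q"
  shows "renyi_div q (distr std_gaussian borel \<psi>) std_gaussian
           \<le> ereal (real DIM('a) * m2 / (1 - m2) + sqrt (real DIM('a)) * m1 + q * m1\<^sup>2 / 2)"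
proof -
  define d where "d = real DIM('a)"
  define K where "K = 1 / (1-m2)^DIM('a)"
  define G where "G x = (2*pi) powr (- real DIM('a) / 2) * exp (- (norm x)\<^sup>2 / 2)" for x :: 'a
  define \<gamma> where "\<gamma> = (std_gaussian :: 'a measure)"
  define \<mu> where "\<mu> = distr \<gamma> borel \<psi>"
  define \<phi> where "\<phi> = inv \<psi>"
  have Kpos: "K > 0" using m2 by (simp add: K_def)
  have \<gamma>def: "\<gamma> = density lborel (\<lambda>x. ennreal (G x))" by (simp add: \<gamma>_def std_gaussian_def G_def)
  have Gpos: "G x > 0" for x by (simp add: G_def)
  have Gne: "ennreal (G x) \<noteq> 0" for x using Gpos[of x] by simp
  have Gmeas[measurable]: "G \<in> borel_measurable borel" unfolding G_def by measurable
  interpret prob: prob_space \<gamma> using prob_gauss by (simp add: \<gamma>_def)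
  have sets_\<gamma>[simp]: "sets \<gamma> = sets borel" by (simp add: \<gamma>def)
  have meas_\<gamma>: "f \<in> borel_measurable \<gamma>" if "f \<in> borel_measurable borel" for f :: "'a \<Rightarrow> ennreal"
    using that by (subst measurable_cong_sets[OF sets_\<gamma> refl])
  have space_\<gamma>[simp]: "space \<gamma> = UNIV" by (simp add: \<gamma>def)
  have bl: "bounded_linear (\<psi>' x)" for x using deriv has_derivative_bounded_linear by blast
  have b: "norm (\<psi>' x h - h) \<le> m2 * norm h" for x h
  proof -
    have "bounded_linear (\<lambda>h. \<psi>' x h - h)" by (intro bounded_linear_sub bl bounded_linear_ident)
    then have "norm (\<psi>' x h - h) \<le> onorm (\<lambda>h. \<psi>' x h - h) * norm h" by (rule onorm)
    also have "\<dots> \<le> m2 * norm h" by (intro mult_right_mono bound2) simp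
    finally show ?thesis .
  qed
  have lip: "norm ((\<psi> x - x) - (\<psi> y - y)) \<le> m2 * norm (x - y)" for x y
  proof (rule differentiable_bound[of UNIV])
    show "convex (UNIV :: 'a set)" by simp
    show "((\<lambda>x. \<psi> x - x) has_derivative (\<lambda>h. \<psi>' z h - h)) (at z within UNIV)" for z
      by (intro derivative_intros deriv)
    show "onorm (\<lambda>h. \<psi>' z h - h) \<le> m2" for z by (rule bound2)
  qed auto
  have cont: "continuous_on UNIV \<psi>"
    using deriv by (meson has_derivative_continuous continuous_at_imp_continuous_on)
  have \<psi>meas[measurable]: "\<psi> \<in> borel_measurable borel" by (rule borel_measurable_continuous_onI[OF cont])
  have \<psi>\<phi>[simp]: "\<psi> (\<phi> y) = y" for y using bij by (simp add: \<phi>_def bij_is_surj surj_f_inv_f)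
  have \<phi>\<psi>[simp]: "\<phi> (\<psi> x) = x" for x using bij by (simp add: \<phi>_def bij_is_inj inv_f_f)
  have lo: "(1-m2) * norm (x - y) \<le> norm (\<psi> x - \<psi> y)" for x y
  proof -
    have "norm (x - y) \<le> norm (\<psi> x - \<psi> y) + norm ((\<psi> x - x) - (\<psi> y - y))"
      using norm_triangle_ineq4[of "\<psi> x - \<psi> y" "(\<psi> x - x) - (\<psi> y - y)"] by (simp add: algebra_simps)
    then show ?thesis using lip[of x y] by (simp add: algebra_simps)
  qed
  have \<phi>cont: "continuous_on UNIV \<phi>"
  proof (rule lipschitz_on_continuous_on)
    show "(1/(1-m2))-lipschitz_on UNIV \<phi>"
    proof (rule lipschitz_onI)
      fix y y' :: 'a
      have "(1-m2) * norm (\<phi> y - \<phi> y') \<le> norm (y - y')" using lo[of "\<phi> y" "\<phi> y'"] by simp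
      then show "dist (\<phi> y) (\<phi> y') \<le> 1 / (1 - m2) * dist y y'"
        using m2 by (simp add: dist_norm field_simps)
    qed (use m2 in simp)
  qed
  have \<psi>\<gamma>: "\<psi> \<in> measurable \<gamma> borel"
    using \<psi>meas by (subst measurable_cong_sets[OF sets_\<gamma> refl])
  have \<phi>meas[measurable]: "\<phi> \<in> borel_measurable borel" by (rule borel_measurable_continuous_onI[OF \<phi>cont])
  have ac: "absolutely_continuous \<gamma> \<mu>"
    unfolding absolutely_continuous_def
  proof
    fix A assume A: "A \<in> null_sets \<gamma>"
    have Ab: "A \<in> sets borel" using A by (simp add: null_sets_def)
    have "A \<in> null_sets (density lborel (\<lambda>x. ennreal (G x)))" using A by (simp add: \<gamma>def)
    then have "AE x in lborel. x \<in> A \<longrightarrow> ennreal (G x) = 0"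
      by (subst (asm) null_sets_density_iff) auto
    then have "AE x in lborel. x \<notin> A" using Gne by (auto elim!: eventually_mono)
    then have A0: "emeasure lborel A = 0"
      using Ab by (subst (asm) AE_iff_measurable[of A]) auto
    have pre: "\<psi> -` A \<in> sets borel" using measurable_sets_borel[OF \<psi>meas Ab] .
    have "emeasure lborel (\<psi> -` A) \<le> ennreal K * emeasure lborel A"
      unfolding K_def by (rule key_a[OF deriv bij m2 b Ab])
    then have "emeasure lborel (\<psi> -` A) = 0" using A0 by simp
    then have "AE x in lborel. x \<notin> \<psi> -` A"
      using pre by (subst AE_iff_measurable[of "\<psi> -` A"]) auto
    then have "\<psi> -` A \<in> null_sets (density lborel (\<lambda>x. ennreal (G x)))"
      using pre by (subst null_sets_density_iff) (auto elim!: eventually_mono)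
    then have "emeasure \<gamma> (\<psi> -` A) = 0" unfolding \<gamma>def by (rule null_setsD1)
    then show "A \<in> null_sets \<mu>"
      using Ab emeasure_distr[OF \<psi>\<gamma>, of A] by (simp add: \<mu>_def null_sets_def)
  qed
  define r where "r = RN_deriv \<gamma> \<mu>"
  have sets_\<mu>: "sets \<mu> = sets \<gamma>" by (simp add: \<mu>_def)
  have \<mu>dens: "density \<gamma> r = \<mu>" unfolding r_def by (rule prob.density_RN_deriv[OF ac sets_\<mu>])
  have rmeas[measurable]: "r \<in> borel_measurable borel"
    unfolding r_def by (subst measurable_cong_sets[OF sets_\<gamma>[symmetric] refl]) (rule borel_measurable_RN_deriv)
  define hr where "hr y = K * exp (((norm y)\<^sup>2 - (norm (\<phi> y))\<^sup>2) / 2)" for y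
  have hrpos: "hr y > 0" for y using Kpos by (simp add: hr_def)
  have hrmeas[measurable]: "hr \<in> borel_measurable borel" unfolding hr_def by measurable
  have hG: "K * G (\<phi> y) = hr y * G y" for y
  proof -
    have "exp (- (norm (\<phi> y))\<^sup>2 / 2) = exp (((norm y)\<^sup>2 - (norm (\<phi> y))\<^sup>2) / 2) * exp (- (norm y)\<^sup>2 / 2)"
      by (simp add: exp_add[symmetric] field_simps)
    then show ?thesis by (simp add: G_def hr_def)
  qed
  have setw: "emeasure \<mu> A \<le> (\<integral>\<^sup>+y. ennreal (hr y) * indicator A y \<partial>\<gamma>)" if A: "A \<in> sets borel" for A
  proof -
    have pre: "\<psi> -` A \<in> sets borel" using measurable_sets_borel[OF \<psi>meas A] .
    have "emeasure \<mu> A = emeasure \<gamma> (\<psi> -` A)" using A emeasure_distr[OF \<psi>\<gamma>, of A] by (simp add: \<mu>_def)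
    also have "\<dots> = (\<integral>\<^sup>+x. ennreal (G x) * indicator (\<psi> -` A) x \<partial>lborel)"
      using pre by (simp add: \<gamma>def emeasure_density)
    also have "\<dots> = (\<integral>\<^sup>+x. (\<lambda>y. ennreal (G (\<phi> y)) * indicator A y) (\<psi> x) \<partial>lborel)"
      by (intro nn_integral_cong) (simp add: indicator_def)
    also have "\<dots> \<le> ennreal K * (\<integral>\<^sup>+y. ennreal (G (\<phi> y)) * indicator A y \<partial>lborel)"
      unfolding K_def by (rule key_int[OF deriv bij m2 b]) (use A in measurable)
    also have "\<dots> = (\<integral>\<^sup>+y. ennreal K * (ennreal (G (\<phi> y)) * indicator A y) \<partial>lborel)"
      by (rule nn_integral_cmult[symmetric]) (use A in measurable)
    also have "\<dots> = (\<integral>\<^sup>+y. ennreal (G y) * (ennreal (hr y) * indicator A y) \<partial>lborel)"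
    proof (intro nn_integral_cong)
      fix y :: 'a
      have "ennreal K * ennreal (G (\<phi> y)) = ennreal (G y) * ennreal (hr y)"
        using Kpos Gpos[of "\<phi> y"] Gpos[of y] hrpos[of y]
        by (simp add: ennreal_mult[symmetric] hG mult.commute)
      then show "ennreal K * (ennreal (G (\<phi> y)) * indicator A y) = ennreal (G y) * (ennreal (hr y) * indicator A y)"
        by (simp add: mult.assoc[symmetric])
    qed
    also have "\<dots> = (\<integral>\<^sup>+y. ennreal (hr y) * indicator A y \<partial>\<gamma>)"
      unfolding \<gamma>def by (rule nn_integral_density[symmetric]) (use A in measurable)
    finally show ?thesis .
  qed
  have rle: "AE y in \<gamma>. r y \<le> ennreal (hr y)"
  proof -
    have "AE y in \<gamma>. \<not> (ennreal (hr y) < r y \<and> hr y \<le> real n)" for n :: nat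
    proof (rule ccontr)
      define B where "B = {y. ennreal (hr y) < r y \<and> hr y \<le> real n}"
      have Bm[measurable]: "B \<in> sets borel" unfolding B_def by measurable
      assume nae: "\<not> (AE y in \<gamma>. \<not> (ennreal (hr y) < r y \<and> hr y \<le> real n))"
      have "(\<integral>\<^sup>+y. ennreal (hr y) * indicator B y \<partial>\<gamma>) \<le> (\<integral>\<^sup>+y. ennreal (real n) \<partial>\<gamma>)"
        by (intro nn_integral_mono) (auto simp: B_def indicator_def)
      also have "\<dots> = ennreal (real n)" using prob.emeasure_space_1 by (simp add: nn_integral_const)
      finally have fin: "(\<integral>\<^sup>+y. ennreal (hr y) * indicator B y \<partial>\<gamma>) \<noteq> \<infinity>"
        by (auto simp: top_unique)
      have "(\<integral>\<^sup>+y. ennreal (hr y) * indicator B y \<partial>\<gamma>) < (\<integral>\<^sup>+y. r y * indicator B y \<partial>\<gamma>)"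
      proof (rule nn_integral_less)
        show "(\<lambda>y. ennreal (hr y) * indicator B y) \<in> borel_measurable \<gamma>" by (rule meas_\<gamma>) measurable
        show "(\<lambda>y. r y * indicator B y) \<in> borel_measurable \<gamma>" by (rule meas_\<gamma>) measurable
        show "(\<integral>\<^sup>+y. ennreal (hr y) * indicator B y \<partial>\<gamma>) \<noteq> \<infinity>" by (rule fin)
        show "AE y in \<gamma>. ennreal (hr y) * indicator B y \<le> r y * indicator B y"
          by (auto simp: B_def indicator_def less_imp_le)
        show "\<not> (AE y in \<gamma>. r y * indicator B y \<le> ennreal (hr y) * indicator B y)"
        proof
          assume "AE y in \<gamma>. r y * indicator B y \<le> ennreal (hr y) * indicator B y"
          then have "AE y in \<gamma>. \<not> (ennreal (hr y) < r y \<and> hr y \<le> real n)"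
          proof (rule eventually_mono)
            fix y assume H: "r y * indicator B y \<le> ennreal (hr y) * indicator B y"
            show "\<not> (ennreal (hr y) < r y \<and> hr y \<le> real n)"
            proof
              assume yB: "ennreal (hr y) < r y \<and> hr y \<le> real n"
              then have "y \<in> B" by (simp add: B_def)
              then have "r y \<le> ennreal (hr y)" using H by simp
              then show False using yB by (auto dest: leD)
            qed
          qed
          with nae show False by blast
        qed
      qed
      also have "(\<integral>\<^sup>+y. r y * indicator B y \<partial>\<gamma>) = emeasure \<mu> B"
      proof -
        have "emeasure (density \<gamma> r) B = (\<integral>\<^sup>+y. r y * indicator B y \<partial>\<gamma>)"
          by (rule emeasure_density) (auto intro!: meas_\<gamma>)
        then show ?thesis by (simp add: \<mu>dens)
      qed
      also have "\<dots> \<le> (\<integral>\<^sup>+y. ennreal (hr y) * indicator B y \<partial>\<gamma>)" by (rule setw[OF Bm])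
      finally show False by simp
    qed
    then have "AE y in \<gamma>. \<forall>n::nat. \<not> (ennreal (hr y) < r y \<and> hr y \<le> real n)"
      by (subst AE_all_countable) blast
    then show ?thesis
    proof (rule eventually_mono)
      fix y assume H: "\<forall>n::nat. \<not> (ennreal (hr y) < r y \<and> hr y \<le> real n)"
      obtain n :: nat where "hr y \<le> real n" using real_arch_simple by blast
      then show "r y \<le> ennreal (hr y)" using H by (auto simp: not_less)
    qed
  qed
  define s where "s = (q-1) * m1"
  define C where "C = K powr (q-1) * exp ((q-1) * m1\<^sup>2 / 2)"
  have s0: "s \<ge> 0" using q m1 by (simp add: s_def)
  have C0: "C > 0" using Kpos by (simp add: C_def)
  define I where "I = (\<integral>\<^sup>+y. ennreal (enn2real (r y) powr q) \<partial>\<gamma>)"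
  have I_le: "I \<le> ennreal (C * exp (s * sqrt d + s\<^sup>2 / 2))"
  proof -
    have "I \<le> (\<integral>\<^sup>+y. r y * ennreal (hr y powr (q-1)) \<partial>\<gamma>)"
      unfolding I_def
    proof (rule nn_integral_mono_AE)
      show "AE y in \<gamma>. ennreal (enn2real (r y) powr q) \<le> r y * ennreal (hr y powr (q-1))"
        using rle
      proof (rule eventually_mono)
        fix y assume le: "r y \<le> ennreal (hr y)"
        show "ennreal (enn2real (r y) powr q) \<le> r y * ennreal (hr y powr (q-1))"
        proof (cases "r y = \<top>")
          case True then show ?thesis by simp
        next
          case False
          then obtain t where t: "r y = ennreal t" "t \<ge> 0" by (cases "r y") auto
          have tle: "t \<le> hr y" using le t hrpos[of y] by (simp add: ennreal_le_iff less_imp_le)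
          have "t powr q \<le> t * hr y powr (q-1)"
          proof (cases "t = 0")
            case True then show ?thesis by simp
          next
            case False
            then have tp: "t > 0" using t by simp
            have "t powr q = t powr (1 + (q-1))" by simp
            also have "\<dots> = t * t powr (q-1)" using tp by (subst powr_add) simp
            also have "\<dots> \<le> t * hr y powr (q-1)"
              using tp tle q by (intro mult_left_mono powr_mono2) auto
            finally show ?thesis .
          qed
          then show ?thesis using t hrpos[of y]
            by (simp add: ennreal_mult[symmetric] ennreal_leI)
        qed
      qed
    qed
    also have "\<dots> = (\<integral>\<^sup>+y. ennreal (hr y powr (q-1)) \<partial>\<mu>)"
      by (subst \<mu>dens[symmetric]) (rule nn_integral_density[symmetric]; rule meas_\<gamma>; measurable)
    also have "\<dots> = (\<integral>\<^sup>+x. ennreal (hr (\<psi> x) powr (q-1)) \<partial>\<gamma>)"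
      unfolding \<mu>_def by (rule nn_integral_distr[OF \<psi>\<gamma>]) measurable
    also have "\<dots> \<le> (\<integral>\<^sup>+x. ennreal C * ennreal (exp (s * norm x)) \<partial>\<gamma>)"
    proof (rule nn_integral_mono)
      fix x :: 'a
      have n1: "norm (\<psi> x) \<le> norm x + m1"
        using norm_triangle_ineq[of x "\<psi> x - x"] bound1[of x] by simp
      have "(norm (\<psi> x))\<^sup>2 \<le> (norm x + m1)\<^sup>2" using n1 by (intro power_mono) auto
      then have sq: "(norm (\<psi> x))\<^sup>2 - (norm x)\<^sup>2 \<le> 2 * m1 * norm x + m1\<^sup>2"
        by (simp add: power2_eq_square algebra_simps)
      have "hr (\<psi> x) powr (q-1) = K powr (q-1) * exp ((q-1) * (((norm (\<psi> x))\<^sup>2 - (norm x)\<^sup>2) / 2))"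
      proof -
        have e: "exp z powr a = exp (a * z)" for z a :: real by (simp add: powr_def)
        show ?thesis using Kpos by (simp add: hr_def powr_mult e)
      qed
      also have "\<dots> \<le> K powr (q-1) * exp ((q-1) * ((2 * m1 * norm x + m1\<^sup>2) / 2))"
        using sq q by (intro mult_left_mono) (auto intro!: mult_left_mono divide_right_mono)
      also have "\<dots> = C * exp (s * norm x)"
        by (simp add: C_def s_def exp_add[symmetric] algebra_simps add_divide_distrib)
      finally have "hr (\<psi> x) powr (q-1) \<le> C * exp (s * norm x)" .
      then show "ennreal (hr (\<psi> x) powr (q-1)) \<le> ennreal C * ennreal (exp (s * norm x))"
        using C0 by (simp add: ennreal_mult[symmetric] ennreal_leI)
    qed
    also have "\<dots> = ennreal C * (\<integral>\<^sup>+x. ennreal (exp (s * norm x)) \<partial>\<gamma>)"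
      by (rule nn_integral_cmult, rule meas_\<gamma>) measurable
    also have "\<dots> \<le> ennreal C * ennreal (exp (s * sqrt d + s\<^sup>2 / 2))"
      using gauss_mgf_norm[OF s0, where 'a='a] by (intro mult_left_mono) (auto simp: \<gamma>_def d_def)
    also have "\<dots> = ennreal (C * exp (s * sqrt d + s\<^sup>2 / 2))"
      using C0 by (simp add: ennreal_mult[symmetric])
    finally show ?thesis .
  qed
  have Ifin: "I \<noteq> \<infinity>" using I_le by (auto simp: top_unique)
  have ren: "renyi_div q \<mu> \<gamma> = ereal (ln (enn2real I) / (q - 1))"
    unfolding renyi_div_def using ac sets_\<mu> Ifin by (simp add: I_def r_def Let_def)
  have lnK: "ln K \<le> d * m2 / (1 - m2)"
  proof -
    have "ln K = d * ln (1 / (1 - m2))"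
      using m2 by (simp add: K_def d_def ln_div ln_realpow)
    also have "\<dots> \<le> d * (1 / (1 - m2) - 1)"
      using m2 by (intro mult_left_mono ln_le_minus_one) (auto simp: d_def)
    also have "\<dots> = d * m2 / (1 - m2)" using m2 by (simp add: field_simps)
    finally show ?thesis .
  qed
  have RHS0: "0 \<le> d * m2 / (1 - m2) + sqrt d * m1 + q * m1\<^sup>2 / 2"
    using m1 m2 q by (simp add: d_def)
  have main: "ln (enn2real I) / (q - 1) \<le> d * m2 / (1 - m2) + sqrt d * m1 + q * m1\<^sup>2 / 2"
  proof (cases "enn2real I = 0")
    case True then show ?thesis using RHS0 by simp
  next
    case False
    have Ipos: "enn2real I > 0" using False by (simp add: enn2real_nonneg less_le)
    have "enn2real I \<le> C * exp (s * sqrt d + s\<^sup>2 / 2)"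
      using I_le Ifin C0 by (simp add: enn2real_leI)
    then have "ln (enn2real I) \<le> ln (C * exp (s * sqrt d + s\<^sup>2 / 2))"
      using Ipos by simp
    also have "\<dots> = (q-1) * ln K + (q-1) * m1\<^sup>2 / 2 + s * sqrt d + s\<^sup>2 / 2"
      using Kpos by (simp add: C_def ln_mult)
    finally have "ln (enn2real I) / (q-1) \<le> ((q-1) * ln K + (q-1) * m1\<^sup>2 / 2 + s * sqrt d + s\<^sup>2 / 2) / (q-1)"
      using q by (simp add: divide_right_mono)
    also have "\<dots> = ln K + sqrt d * m1 + q * m1\<^sup>2 / 2"
      using q by (simp add: s_def field_simps power2_eq_square)
    also have "\<dots> \<le> d * m2 / (1 - m2) + sqrt d * m1 + q * m1\<^sup>2 / 2" using lnK by simp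
    finally show ?thesis .
  qed
  show ?thesis using ren main by (simp add: \<mu>_def \<gamma>_def d_def)
qed

end
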